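(* Let $g:\mathbb{R}\to\mathbb{R}$ be differentiable, $c_0>0$, $G(t)=\int_0^tg(s)\,ds$, assume $\int_{-\infty}^\infty e^{-c_0G(t)}dt<\infty$, let $c_1 = 1/\int_{-\infty}^\infty e^{-c_0G(t)}dt$, and let $Y$ have density $p(t)=c_1e^{-c_0G(t)}$ on $\mathbb{R}$ with distribution function $F(x)=P(Y\le x)$. Assume: (H1) $g$ is non-decreasing, $g(t)\ge 0$ for $t>0$ and $g(t)\le 0$ for $t\le 0$; (H2) there is $c_2<\infty$ such that for all $x$, $\min\big(1/c_1, 1/|c_0 g(x)|\big)\,(|x| + 3/c_1)\,\max(1, c_0|g'(x)|) \le c_2$. Then for all real $x$: $$\min(1-F(x),F(x))\le d_1p(x),\qquad |p'(x)|\min(F(x),1-F(x))\le d_2p^2(x),$$ $$M(x)\,\big|(p'/p)'(x)\big|\le d_3p(x),\qquad M(x)\le d_4p(x),$$ with $d_1=1/c_1$, $d_2=1$, $d_3=c_2$, $d_4=c_2$, where $$M(x)=\min\Big(E|Y|I_{\{Y\le x\}}+E|Y|\,F(x),\; E|Y|I_{\{Y>x\}}+E|Y|\,(1-F(x))\Big).$$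
   Context: In (H2), $1/|c_0g(x)|$ is interpreted as $+\infty$ when $g(x)=0$. $I_A$ denotes the indicator of the event $A$. *)

theory Defs
  imports "HOL-Analysis.Analysis"
begin

end

theory Submission
  imports Defs "HOL-Probability.Distributions"
begin


lemma G_deriv:
  fixes g :: "real \<Rightarrow> real"
  assumes diff: "\<And>x. g differentiable (at x)"
  shows "((\<lambda>t. LBINT s=0..t. g s) has_real_derivative g x) (at x)"
proof -
  have cont: "continuous_on UNIV g"
    using diff by (simp add: continuous_at_imp_continuous_on differentiable_imp_continuous_within)
  define a where "a = min 0 x - 1"
  define b where "b = max 0 x + 1"
  have "((\<lambda>u. LBINT y=0..u. g y) has_vector_derivative (g x)) (at x within {a..b})"
  proof -
    have c: "continuous_on {a..b} g" using cont continuous_on_subset by blast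
    have "a \<le> 0" "0 \<le> b" "a \<le> x" "x \<le> b" by (auto simp: a_def b_def)
    from interval_integral_FTC2[of a 0 b g x, OF this(1,2) c this(3,4)]
    show ?thesis by (simp add: zero_ereal_def)
  qed
  then have "((\<lambda>u. LBINT y=0..u. g y) has_vector_derivative (g x)) (at x within {a<..<b})"
    by (rule has_vector_derivative_within_subset) auto
  then have "((\<lambda>u. LBINT y=0..u. g y) has_vector_derivative (g x)) (at x)"
    by (subst (asm) has_vector_derivative_within_open) (auto simp: a_def b_def)
  then show ?thesis
    by (simp add: has_real_derivative_iff_has_vector_derivative)
qed

lemma tangent:
  fixes G g :: "real \<Rightarrow> real"
  assumes D: "\<And>x. (G has_real_derivative g x) (at x)" and m: "mono g"
  shows "G t \<ge> G x + g x * (t - x)"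
proof (cases "x < t")
  case True
  from MVT2[OF True, of G g] D obtain z where z: "x < z" "z < t" "G t - G x = (t - x) * g z" by blast
  have "g x \<le> g z" using m z by (simp add: mono_def)
  then show ?thesis using z True by (smt (verit) mult_left_mono mult.commute)
next
  case False
  show ?thesis
  proof (cases "t < x")
    case True
    from MVT2[OF True, of G g] D obtain z where z: "t < z" "z < x" "G x - G t = (x - t) * g z" by blast
    have "g z \<le> g x" using m z by (simp add: mono_def)
    then have "(x - t) * g z \<le> (x - t) * g x" using True by (intro mult_left_mono) auto
    then show ?thesis using z True by (simp add: algebra_simps)
  next
    case False
    then show ?thesis using \<open>\<not> x < t\<close> by auto
  qed
qed

lemma superadd:
  fixes G g :: "real \<Rightarrow> real"
  assumes D: "\<And>x. (G has_real_derivative g x) (at x)" and m: "mono g" and G0: "G 0 = 0"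
    and u: "0 \<le> u" and v: "0 \<le> v"
  shows "G (u + v) \<ge> G u + G v"
proof (cases "v = 0")
  case True then show ?thesis using G0 by simp
next
  case False
  then have v0: "0 < v" using v by simp
  have DD: "\<And>s. ((\<lambda>s. G (u + s) - G s) has_real_derivative (g (u + s) - g s)) (at s)"
    by (rule derivative_eq_intros DERIV_chain2[OF D] | simp add: D)+
  from MVT2[OF v0, of "\<lambda>s. G (u + s) - G s" "\<lambda>s. g (u + s) - g s"] DD
  obtain z where z: "0 < z" "z < v" "(G (u + v) - G v) - (G (u + 0) - G 0) = (v - 0) * (g (u + z) - g z)"
    by blast
  have "g z \<le> g (u + z)" using m u by (simp add: mono_def)
  then show ?thesis using z v0 G0 by (smt (verit) mult_nonneg_nonneg)
qed


lemma shift_nn: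
  fixes f :: "real \<Rightarrow> real"
  assumes [measurable]: "f \<in> borel_measurable borel"
  shows "(\<integral>\<^sup>+t. ennreal (indicator {x..} t * f t) \<partial>lborel) = (\<integral>\<^sup>+u. ennreal (indicator {0..} u * f (x + u)) \<partial>lborel)"
  using nn_integral_real_affine[where c=1 and t=x and f="\<lambda>t. ennreal (indicator {x..} t * f t)"]
  by (simp add: indicator_def)

lemma tail_S:
  fixes q :: "real \<Rightarrow> real"
  assumes [measurable]: "q \<in> borel_measurable borel" and qpos: "\<And>t. q t > 0"
    and S: "\<And>u v. 0 \<le> u \<Longrightarrow> 0 \<le> v \<Longrightarrow> q (u+v) \<le> q u * q v"
    and x: "0 \<le> x"
    and zp: "(\<integral>\<^sup>+t. ennreal (indicator {0..} t * q t) \<partial>lborel) = ennreal zp"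
  shows "(\<integral>\<^sup>+t. ennreal (indicator {x..} t * q t) \<partial>lborel) \<le> ennreal (q x * zp)"
proof -
  have "(\<integral>\<^sup>+t. ennreal (indicator {x..} t * q t) \<partial>lborel) = (\<integral>\<^sup>+u. ennreal (indicator {0..} u * q (x + u)) \<partial>lborel)"
    by (rule shift_nn) simp
  also have "\<dots> \<le> (\<integral>\<^sup>+u. ennreal (q x) * ennreal (indicator {0..} u * q u) \<partial>lborel)"
  proof (rule nn_integral_mono)
    fix u
    have "indicator {0..} u * q (x + u) \<le> q x * (indicator {0..} u * q u)"
      using S[OF x, of u] by (auto simp: indicator_def)
    then show "ennreal (indicator {0..} u * q (x + u)) \<le> ennreal (q x) * ennreal (indicator {0..} u * q u)"
      using qpos[of x] qpos[of u] by (subst ennreal_mult[symmetric]) (auto intro!: ennreal_leI)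
  qed
  also have "\<dots> = ennreal (q x) * ennreal zp"
    by (subst nn_integral_cmult) (auto simp: zp)
  also have "\<dots> = ennreal (q x * zp)"
    using qpos[of x] by (simp add: ennreal_mult')
  finally show ?thesis .
qed


lemma exp_int0:
  fixes a :: real assumes a: "a > 0"
  shows "(\<integral>\<^sup>+u. ennreal (indicator {0..} u * exp (- a * u)) \<partial>lborel) = ennreal (1 / a)"
proof -
  let ?I = "(\<integral>\<^sup>+u. ennreal (indicator {0..} u * exp (- a * u)) \<partial>lborel)"
  have "1 = (\<integral>\<^sup>+x. ennreal (x^0 * exp (-x)) * indicator {0 ..} x \<partial>lborel)"
    using nn_intergal_power_times_exp_Ici[of 0] by simp
  also have "\<dots> = ennreal a * (\<integral>\<^sup>+x. ennreal ((0 + a * x)^0 * exp (-(0 + a * x))) * indicator {0 ..} (0 + a * x) \<partial>lborel)"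
    using nn_integral_real_affine[where c=a and t=0 and f="\<lambda>x. ennreal (x^0 * exp (-x)) * indicator {0 ..} x"] a
    by simp
  also have "(\<integral>\<^sup>+x. ennreal ((0 + a * x)^0 * exp (-(0 + a * x))) * indicator {0 ..} (0 + a * x) \<partial>lborel) = ?I"
    using a by (intro nn_integral_cong) (auto simp: indicator_def zero_le_mult_iff)
  finally have 1: "1 = ennreal a * ?I" .
  have "?I = (ennreal (1/a) * ennreal a) * ?I"
    using a by (simp add: ennreal_mult''[symmetric])
  also have "\<dots> = ennreal (1/a)" using 1 by (simp add: mult.assoc)
  finally show ?thesis .
qed

lemma exp_int1:
  fixes a :: real assumes a: "a > 0"
  shows "(\<integral>\<^sup>+u. ennreal (indicator {0..} u * (u * exp (- a * u))) \<partial>lborel) = ennreal (1 / a^2)"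
proof -
  let ?I = "(\<integral>\<^sup>+u. ennreal (indicator {0..} u * (u * exp (- a * u))) \<partial>lborel)"
  have "1 = (\<integral>\<^sup>+x. ennreal (x^1 * exp (-x)) * indicator {0 ..} x \<partial>lborel)"
    using nn_intergal_power_times_exp_Ici[of 1] by simp
  also have "\<dots> = ennreal a * (\<integral>\<^sup>+x. ennreal ((0 + a * x)^1 * exp (-(0 + a * x))) * indicator {0 ..} (0 + a * x) \<partial>lborel)"
    using nn_integral_real_affine[where c=a and t=0 and f="\<lambda>x. ennreal (x^1 * exp (-x)) * indicator {0 ..} x"] a
    by simp
  also have "(\<integral>\<^sup>+x. ennreal ((0 + a * x)^1 * exp (-(0 + a * x))) * indicator {0 ..} (0 + a * x) \<partial>lborel)
     = (\<integral>\<^sup>+x. ennreal a * ennreal (indicator {0..} x * (x * exp (- a * x))) \<partial>lborel)"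
    using a by (intro nn_integral_cong) (auto simp: indicator_def zero_le_mult_iff ennreal_mult[symmetric] mult.assoc)
  also have "\<dots> = ennreal a * ?I" by (rule nn_integral_cmult) simp
  finally have 1: "1 = ennreal a * (ennreal a * ?I)" .
  have "?I = (ennreal (1/a^2) * (ennreal a * ennreal a)) * ?I"
    using a by (simp add: ennreal_mult''[symmetric] power2_eq_square)
  also have "\<dots> = ennreal (1/a^2)" using 1 by (simp add: mult.assoc)
  finally show ?thesis .
qed


lemma enn_eq:
  fixes a b c d :: real
  assumes "0 \<le> a" "0 \<le> b" "0 \<le> c" "0 \<le> d"
  shows "ennreal a * (ennreal b * ennreal c + ennreal d) = ennreal (a*(b*c+d))"
  using assms by (simp add: ennreal_mult ennreal_plus)

lemma enn_aux:
  fixes a b c d L :: real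
  assumes "0 \<le> a" "0 \<le> b" "0 \<le> c" "0 \<le> d" "L \<le> a*(b*c+d)"
  shows "ennreal L \<le> ennreal a * (ennreal b * ennreal c + ennreal d)"
proof -
  have "ennreal a * (ennreal b * ennreal c + ennreal d) = ennreal (a*(b*c+d))"
    using assms by (simp add: ennreal_mult ennreal_plus)
  then show ?thesis using assms(5) by (simp add: ennreal_leI)
qed

lemma tail_T:
  fixes q :: "real \<Rightarrow> real"
  assumes [measurable]: "q \<in> borel_measurable borel" and qpos: "\<And>t. q t > 0"
    and a: "a > 0"
    and Tan: "\<And>t. x \<le> t \<Longrightarrow> q t \<le> q x * exp (- a * (t - x))"
  shows "(\<integral>\<^sup>+t. ennreal (indicator {x..} t * q t) \<partial>lborel) \<le> ennreal (q x / a)"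
proof -
  have "(\<integral>\<^sup>+t. ennreal (indicator {x..} t * q t) \<partial>lborel) = (\<integral>\<^sup>+u. ennreal (indicator {0..} u * q (x + u)) \<partial>lborel)"
    by (rule shift_nn) simp
  also have "\<dots> \<le> (\<integral>\<^sup>+u. ennreal (q x) * ennreal (indicator {0..} u * exp (- a * u)) \<partial>lborel)"
  proof (rule nn_integral_mono)
    fix u
    have "indicator {0..} u * q (x + u) \<le> q x * (indicator {0..} u * exp (- a * u))"
      using Tan[of "x+u"] by (auto simp: indicator_def)
    then show "ennreal (indicator {0..} u * q (x + u)) \<le> ennreal (q x) * ennreal (indicator {0..} u * exp (- a * u))"
      using qpos[of x] by (subst ennreal_mult[symmetric]) (auto intro!: ennreal_leI)
  qed
  also have "\<dots> = ennreal (q x) * ennreal (1 / a)"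
    by (subst nn_integral_cmult) (auto simp: exp_int0[OF a, simplified])
  also have "\<dots> = ennreal (q x / a)"
    using qpos[of x] by (simp add: ennreal_mult'[symmetric])
  finally show ?thesis .
qed

lemma tail_T1:
  fixes q :: "real \<Rightarrow> real"
  assumes [measurable]: "q \<in> borel_measurable borel" and qpos: "\<And>t. q t > 0"
    and a: "a > 0" and x: "0 \<le> x"
    and Tan: "\<And>t. x \<le> t \<Longrightarrow> q t \<le> q x * exp (- a * (t - x))"
  shows "(\<integral>\<^sup>+t. ennreal (indicator {x..} t * (t * q t)) \<partial>lborel) \<le> ennreal (q x * (x / a + 1 / a^2))"
proof -
  have "(\<integral>\<^sup>+t. ennreal (indicator {x..} t * (t * q t)) \<partial>lborel)
      = (\<integral>\<^sup>+u. ennreal (indicator {0..} u * ((x + u) * q (x + u))) \<partial>lborel)"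
    by (rule shift_nn) simp
  also have "\<dots> \<le> (\<integral>\<^sup>+u. ennreal (q x) * (ennreal x * ennreal (indicator {0..} u * exp (- a * u))
                      + ennreal (indicator {0..} u * (u * exp (- a * u)))) \<partial>lborel)"
  proof (rule nn_integral_mono)
    fix u
    have "indicator {0..} u * ((x + u) * q (x + u)) \<le> q x * (x * (indicator {0..} u * exp (- a * u))
                      + (indicator {0..} u * (u * exp (- a * u))))"
    proof (cases "0 \<le> u")
      case True
      have "(x + u) * q (x + u) \<le> (x + u) * (q x * exp (- a * u))"
        using Tan[of "x+u"] True x by (intro mult_left_mono) auto
      then show ?thesis using True by (simp add: algebra_simps)
    qed (auto simp: indicator_def)
    then show "ennreal (indicator {0..} u * ((x + u) * q (x + u))) \<le> ennreal (q x) * (ennreal x * ennreal (indicator {0..} u * exp (- a * u))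
                      + ennreal (indicator {0..} u * (u * exp (- a * u))))"
      using qpos[of x] x by (intro enn_aux) (auto simp: indicator_def)
  qed
  also have "\<dots> = ennreal (q x) * (ennreal x * ennreal (1 / a) + ennreal (1 / a^2))"
    by (subst nn_integral_cmult, simp, subst nn_integral_add, simp, simp, subst nn_integral_cmult)
       (auto simp: exp_int0[OF a, simplified] exp_int1[OF a, simplified])
  also have "\<dots> = ennreal (q x * (x / a + 1 / a^2))"
    using qpos[of x] x a by (subst enn_eq) (auto simp: divide_inverse)
  finally show ?thesis .
qed

lemma tail_S1:
  fixes q :: "real \<Rightarrow> real"
  assumes [measurable]: "q \<in> borel_measurable borel" and qpos: "\<And>t. q t > 0"
    and S: "\<And>u v. 0 \<le> u \<Longrightarrow> 0 \<le> v \<Longrightarrow> q (u+v) \<le> q u * q v"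
    and x: "0 \<le> x"
    and zp: "(\<integral>\<^sup>+t. ennreal (indicator {0..} t * q t) \<partial>lborel) = ennreal zp"
    and w: "(\<integral>\<^sup>+t. ennreal (indicator {0..} t * (t * q t)) \<partial>lborel) \<le> ennreal w"
    and zp0: "0 \<le> zp" and w0: "0 \<le> w"
  shows "(\<integral>\<^sup>+t. ennreal (indicator {x..} t * (t * q t)) \<partial>lborel) \<le> ennreal (q x * (x * zp + w))"
proof -
  have "(\<integral>\<^sup>+t. ennreal (indicator {x..} t * (t * q t)) \<partial>lborel)
      = (\<integral>\<^sup>+u. ennreal (indicator {0..} u * ((x + u) * q (x + u))) \<partial>lborel)"
    by (rule shift_nn) simp
  also have "\<dots> \<le> (\<integral>\<^sup>+u. ennreal (q x) * (ennreal x * ennreal (indicator {0..} u * q u)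
                      + ennreal (indicator {0..} u * (u * q u))) \<partial>lborel)"
  proof (rule nn_integral_mono)
    fix u
    have "indicator {0..} u * ((x + u) * q (x + u)) \<le> q x * (x * (indicator {0..} u * q u)
                      + (indicator {0..} u * (u * q u)))"
    proof (cases "0 \<le> u")
      case True
      have "(x + u) * q (x + u) \<le> (x + u) * (q x * q u)"
        using S[OF x True] True x by (intro mult_left_mono) auto
      then show ?thesis using True by (simp add: algebra_simps)
    qed (auto simp: indicator_def)
    then show "ennreal (indicator {0..} u * ((x + u) * q (x + u))) \<le> ennreal (q x) * (ennreal x * ennreal (indicator {0..} u * q u)
                      + ennreal (indicator {0..} u * (u * q u)))"
      using qpos[of x] qpos[of u] x by (intro enn_aux) (auto simp: indicator_def less_imp_le)
  qed
  also have "\<dots> = ennreal (q x) * (ennreal x * ennreal zp + (\<integral>\<^sup>+t. ennreal (indicator {0..} t * (t * q t)) \<partial>lborel))"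
    by (subst nn_integral_cmult, simp, subst nn_integral_add, simp, simp, subst nn_integral_cmult)
       (auto simp: zp)
  also have "\<dots> \<le> ennreal (q x) * (ennreal x * ennreal zp + ennreal w)"
    using w by (intro mult_left_mono add_left_mono) auto
  also have "\<dots> = ennreal (q x * (x * zp + w))"
    using qpos[of x] x zp0 w0 by (subst enn_eq) auto
  finally show ?thesis .
qed


lemma mean_bound:
  fixes q :: "real \<Rightarrow> real"
  assumes qm[measurable]: "q \<in> borel_measurable borel" and qpos: "\<And>t. q t > 0"
    and S: "\<And>u v. 0 \<le> u \<Longrightarrow> 0 \<le> v \<Longrightarrow> q (u+v) \<le> q u * q v"
    and zp: "(\<integral>\<^sup>+t. ennreal (indicator {0..} t * q t) \<partial>lborel) = ennreal zp"
    and zp0: "0 \<le> zp"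
  shows "(\<integral>\<^sup>+t. ennreal (indicator {0..} t * (t * q t)) \<partial>lborel) \<le> ennreal (zp * zp)"
proof -
  define H where "H = (\<lambda>t s::real. if 0 \<le> s \<and> s \<le> t then ennreal (q t) else 0)"
  have Hm: "case_prod H \<in> borel_measurable (lborel \<Otimes>\<^sub>M lborel)"
    unfolding H_def by measurable
  have "(\<integral>\<^sup>+t. ennreal (indicator {0..} t * (t * q t)) \<partial>lborel) = (\<integral>\<^sup>+t. (\<integral>\<^sup>+s. H t s \<partial>lborel) \<partial>lborel)"
  proof (rule nn_integral_cong)
    fix t :: real
    have "(\<integral>\<^sup>+s. H t s \<partial>lborel) = (\<integral>\<^sup>+s. ennreal (q t) * indicator {0..t} s \<partial>lborel)"
      by (rule nn_integral_cong) (auto simp: H_def indicator_def)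
    also have "\<dots> = ennreal (q t) * emeasure lborel {0..t}"
      by (rule nn_integral_cmult_indicator) simp
    also have "\<dots> = ennreal (indicator {0..} t * (t * q t))"
      using qpos[of t] by (cases "0 \<le> t") (auto simp: indicator_def ennreal_mult'[symmetric] mult.commute)
    finally show "ennreal (indicator {0..} t * (t * q t)) = (\<integral>\<^sup>+s. H t s \<partial>lborel)" by simp
  qed
  also have "\<dots> = (\<integral>\<^sup>+s. (\<integral>\<^sup>+t. H t s \<partial>lborel) \<partial>lborel)"
    using lborel_pair.Fubini'[OF Hm] by simp
  also have "\<dots> \<le> (\<integral>\<^sup>+s. ennreal (indicator {0..} s * q s) * ennreal zp \<partial>lborel)"
  proof (rule nn_integral_mono)
    fix s :: real
    show "(\<integral>\<^sup>+t. H t s \<partial>lborel) \<le> ennreal (indicator {0..} s * q s) * ennreal zp"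
    proof (cases "0 \<le> s")
      case True
      have "(\<integral>\<^sup>+t. H t s \<partial>lborel) = (\<integral>\<^sup>+t. ennreal (indicator {s..} t * q t) \<partial>lborel)"
        using True by (intro nn_integral_cong) (auto simp: H_def indicator_def)
      also have "\<dots> \<le> ennreal (q s * zp)"
        by (rule tail_S[OF qm qpos S True zp])
      also have "\<dots> = ennreal (indicator {0..} s * q s) * ennreal zp"
        using True qpos[of s] by (simp add: ennreal_mult')
      finally show ?thesis .
    next
      case False
      then show ?thesis by (simp add: H_def)
    qed
  qed
  also have "\<dots> = ennreal zp * ennreal zp"
    by (subst nn_integral_multc) (auto simp: zp)
  also have "\<dots> = ennreal (zp * zp)" using zp0 by (simp add: ennreal_mult)
  finally show ?thesis .
qed


lemma alg:
  fixes Z c1 qx zs y a Q U E :: real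
  assumes Z: "Z > 0" and c1: "c1 = 1 / Z" and qx: "qx > 0" and zs: "0 \<le> zs" "zs \<le> Z"
    and y: "0 \<le> y" and a: "0 \<le> a" and Q0: "0 \<le> Q" and Q1: "Q \<le> qx * zs"
    and Q2: "a > 0 \<Longrightarrow> Q \<le> qx / a"
    and U1: "U \<le> qx * (y * zs + zs * zs)" and U2: "a > 0 \<Longrightarrow> U \<le> qx * (y / a + 1 / a^2)"
    and E: "0 \<le> E" "E \<le> Z * Z"
  shows "c1 * Q \<le> qx"
    and "a * (c1 * qx) * (c1 * Q) \<le> (c1 * qx)^2"
    and "c1 * U + (c1 * E) * (c1 * Q) \<le> (if a = 0 then Z else min Z (1 / a)) * (y + 3 * Z) * (c1 * qx)"
proof -
  have c1p: "c1 > 0" using Z c1 by simp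
  have cZ: "c1 * Z = 1" using Z c1 by simp
  have "c1 * Q \<le> c1 * (qx * zs)" using Q1 c1p by (simp add: mult_left_mono)
  also have "\<dots> \<le> c1 * (qx * Z)" using zs qx c1p by (simp add: mult_left_mono)
  also have "\<dots> = (c1 * Z) * qx" by (simp add: algebra_simps)
  finally show i: "c1 * Q \<le> qx" using cZ by simp
  show "a * (c1 * qx) * (c1 * Q) \<le> (c1 * qx)^2"
  proof (cases "a = 0")
    case True then show ?thesis by simp
  next
    case False
    then have ap: "a > 0" using a by simp
    have "a * Q \<le> qx" using Q2[OF ap] ap by (simp add: field_simps)
    then have "(c1 * qx) * c1 * (a * Q) \<le> (c1 * qx) * c1 * qx"
      using c1p qx by (intro mult_left_mono) auto
    then show ?thesis by (simp add: power2_eq_square algebra_simps)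
  qed
  have "c1 * E \<le> c1 * (Z * Z)" using E c1p by (simp add: mult_left_mono)
  also have "\<dots> = Z" using cZ by (metis mult.assoc mult_1)
  finally have "c1 * E \<le> Z" .
  then have EQ: "(c1 * E) * (c1 * Q) \<le> Z * (c1 * Q)"
    using Q0 c1p by (intro mult_right_mono) auto
  show "c1 * U + (c1 * E) * (c1 * Q) \<le> (if a = 0 then Z else min Z (1 / a)) * (y + 3 * Z) * (c1 * qx)"
  proof (cases "a = 0 \<or> Z \<le> 1 / a")
    case True
    have K: "(if a = 0 then Z else min Z (1 / a)) = Z" using True by auto
    have "c1 * U \<le> c1 * (qx * (y * Z + Z * Z))"
    proof -
      have "y * zs + zs * zs \<le> y * Z + Z * Z" using zs y by (intro add_mono mult_mono) auto
      then have "U \<le> qx * (y * Z + Z * Z)" using U1 qx by (smt (verit) mult_left_mono)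
      then show ?thesis using c1p by (simp add: mult_left_mono)
    qed
    moreover have "Z * (c1 * Q) \<le> Z * qx" using i Z by (simp add: mult_left_mono)
    ultimately have "c1 * U + (c1 * E) * (c1 * Q) \<le> c1 * (qx * (y * Z + Z * Z)) + Z * qx" using EQ by linarith
    also have "\<dots> = Z * (y + 2 * Z) * (c1 * qx)" using cZ by (simp add: algebra_simps)
    also have "\<dots> \<le> Z * (y + 3 * Z) * (c1 * qx)" using Z c1p qx y by (intro mult_right_mono mult_left_mono) auto
    finally show ?thesis using K by simp
  next
    case False
    then have ap: "a > 0" and aZ: "1 / a < Z" using a by auto
    have K: "(if a = 0 then Z else min Z (1 / a)) = 1 / a" using ap aZ by auto
    have "U \<le> qx * (y / a + Z / a)"
    proof -
      have "1 / a^2 \<le> Z / a" using aZ ap by (simp add: power2_eq_square field_simps)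
      then show ?thesis using U2[OF ap] qx by (smt (verit) mult_left_mono)
    qed
    then have "c1 * U \<le> c1 * (qx * (y / a + Z / a))" using c1p by (simp add: mult_left_mono)
    moreover have "Z * (c1 * Q) \<le> Z * (c1 * (qx / a))" using Q2[OF ap] c1p Z by (intro mult_left_mono) auto
    ultimately have "c1 * U + (c1 * E) * (c1 * Q) \<le> c1 * (qx * (y / a + Z / a)) + Z * (c1 * (qx / a))" using EQ by linarith
    also have "\<dots> = (1 / a) * (y + 2 * Z) * (c1 * qx)" by (simp add: algebra_simps add_divide_distrib)
    also have "\<dots> \<le> (1 / a) * (y + 3 * Z) * (c1 * qx)" using Z c1p qx y ap by (intro mult_right_mono mult_left_mono) auto
    finally show ?thesis using K by simp
  qed
qed


lemma set_bound:
  fixes f :: "real \<Rightarrow> real"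
  assumes f0: "\<And>t. 0 \<le> f t" and AB: "A \<subseteq> B"
    and nn: "(\<integral>\<^sup>+t. ennreal (indicator B t * f t) \<partial>lborel) \<le> ennreal r" and r: "0 \<le> r"
  shows "set_lebesgue_integral lborel A f \<le> r"
  unfolding set_lebesgue_integral_def
proof (rule integral_real_bounded[OF r])
  have "(\<integral>\<^sup>+t. ennreal (indicator A t *\<^sub>R f t) \<partial>lborel) \<le> (\<integral>\<^sup>+t. ennreal (indicator B t * f t) \<partial>lborel)"
    using AB f0 by (intro nn_integral_mono) (auto simp: indicator_def intro!: ennreal_leI)
  then show "(\<integral>\<^sup>+t. ennreal (indicator A t *\<^sub>R f t) \<partial>lborel) \<le> ennreal r" using nn by simp
qed

lemma refl_nn:
  fixes f :: "real \<Rightarrow> real"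
  assumes [measurable]: "f \<in> borel_measurable borel"
  shows "(\<integral>\<^sup>+t. ennreal (indicator {..y} t * f t) \<partial>lborel) = (\<integral>\<^sup>+t. ennreal (indicator {-y..} t * f (-t)) \<partial>lborel)"
  using nn_integral_real_affine[where c="-1" and t=0 and f="\<lambda>t. ennreal (indicator {..y} t * f t)"]
  by (simp add: indicator_def minus_le_iff)

lemma fin:
  fixes M B K px d mx c2 :: real
  assumes "M \<le> B" "B \<le> K * px" "0 \<le> K" "0 < px" "\<bar>d\<bar> \<le> mx" "1 \<le> mx" "K * mx \<le> c2"
  shows "M * \<bar>d\<bar> \<le> c2 * px" "M \<le> c2 * px"
proof -
  have "K * 1 \<le> K * mx" using assms by (intro mult_left_mono) auto
  then have Kp: "K * px \<le> K * mx * px" using assms by (intro mult_right_mono) auto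
  also have "\<dots> \<le> c2 * px" using assms by (simp add: mult_right_mono)
  finally have Kc: "K * px \<le> c2 * px" .
  show "M \<le> c2 * px" using assms Kc by linarith
  show "M * \<bar>d\<bar> \<le> c2 * px"
  proof (cases "M \<le> 0")
    case True
    have "M * \<bar>d\<bar> \<le> 0" using True by (simp add: mult_nonpos_nonneg)
    also have "0 \<le> c2 * px" using assms Kc by (smt (verit) mult_nonneg_nonneg)
    finally show ?thesis .
  next
    case False
    have "M * \<bar>d\<bar> \<le> M * mx" using False assms by (simp add: mult_left_mono)
    also have "\<dots> \<le> K * px * mx" using False assms by (intro mult_right_mono) auto
    also have "\<dots> \<le> c2 * px" using assms by (smt (verit) mult.commute mult.left_commute mult_right_mono)
    finally show ?thesis .
  qed
qed


theorem lemma4p2: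
  fixes g :: "real \<Rightarrow> real" and c0 c2 :: real
  assumes diff: "\<And>x. g differentiable (at x)"
    and c0_pos: "c0 > 0"
  defines "G \<equiv> \<lambda>t. LBINT s=0..t. g s"
  assumes int: "integrable lborel (\<lambda>t. exp (- c0 * G t))"
  defines "c1 \<equiv> 1 / (\<integral>t. exp (- c0 * G t) \<partial>lborel)"
  defines "p \<equiv> \<lambda>t. c1 * exp (- c0 * G t)"
  defines "F \<equiv> \<lambda>x. set_lebesgue_integral lborel {..x} p"
  defines "EY \<equiv> \<integral>t. \<bar>t\<bar> * p t \<partial>lborel"
  defines "M \<equiv> \<lambda>x. min (set_lebesgue_integral lborel {..x} (\<lambda>t. \<bar>t\<bar> * p t) + EY * F x)
                           (set_lebesgue_integral lborel {x<..} (\<lambda>t. \<bar>t\<bar> * p t) + EY * (1 - F x))"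
  assumes H1: "mono g" "\<forall>t>0. g t \<ge> 0" "\<forall>t\<le>0. g t \<le> 0"
    and H2: "\<forall>x. (if g x = 0 then 1 / c1 else min (1 / c1) (1 / \<bar>c0 * g x\<bar>))
                 * (\<bar>x\<bar> + 3 / c1) * max 1 (c0 * \<bar>deriv g x\<bar>) \<le> c2"
  shows "\<forall>x. min (1 - F x) (F x) \<le> (1 / c1) * p x
           \<and> \<bar>deriv p x\<bar> * min (F x) (1 - F x) \<le> 1 * (p x)\<^sup>2
           \<and> M x * \<bar>deriv (\<lambda>t. deriv p t / p t) x\<bar> \<le> c2 * p x
           \<and> M x \<le> c2 * p x"
proof -
  define Gr where "Gr = (\<lambda>t::real. G (ereal t))"
  have D: "\<And>x. (Gr has_real_derivative g x) (at x)" unfolding G_def Gr_def by (rule G_deriv[OF diff])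
  have G0: "Gr 0 = 0" unfolding G_def Gr_def by (simp add: zero_ereal_def)
  define q where "q = (\<lambda>t. exp (- c0 * Gr t))"
  define Z where "Z = (\<integral>t. q t \<partial>lborel)"
  have c1Z: "c1 = 1 / Z" unfolding c1_def Z_def q_def Gr_def ..
  have p_q: "p = (\<lambda>t. c1 * q t)" unfolding p_def q_def Gr_def ..
  have qpos: "\<And>t. q t > 0" unfolding q_def by simp
  have Gc: "continuous_on UNIV Gr"
    using D by (meson DERIV_isCont continuous_at_imp_continuous_on)
  have qc: "continuous_on UNIV q" unfolding q_def
    by (intro continuous_intros Gc)
  have qm[measurable]: "q \<in> borel_measurable borel" by (rule borel_measurable_continuous_onI[OF qc])
  have qi: "integrable lborel q" using int unfolding q_def Gr_def .
  have Dq: "\<And>x. (q has_real_derivative (- c0 * g x * q x)) (at x)"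
  proof -
    fix x
    have "((\<lambda>t. exp (- c0 * Gr t)) has_real_derivative exp (- c0 * Gr x) * (- c0 * g x)) (at x)"
      by (rule DERIV_chain2[OF DERIV_exp DERIV_cmult[OF D]])
    then show "(q has_real_derivative (- c0 * g x * q x)) (at x)" unfolding q_def by (simp add: mult_ac)
  qed
  have S: "\<And>u v. 0 \<le> u \<Longrightarrow> 0 \<le> v \<Longrightarrow> q (u+v) \<le> q u * q v"
  proof -
    fix u v :: real assume "0 \<le> u" "0 \<le> v"
    from superadd[OF D H1(1) G0 this] have "Gr u + Gr v \<le> Gr (u + v)" .
    then have "c0 * (Gr u + Gr v) \<le> c0 * Gr (u + v)" using c0_pos by (intro mult_left_mono) auto
    then have "- c0 * Gr (u + v) \<le> - c0 * Gr u + - c0 * Gr v" by (simp add: algebra_simps)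
    then show "q (u+v) \<le> q u * q v" unfolding q_def by (simp add: exp_add[symmetric])
  qed
  have Tan: "\<And>x t. q t \<le> q x * exp (- (c0 * g x) * (t - x))"
  proof -
    fix x t :: real
    from tangent[OF D H1(1)] have "Gr x + g x * (t - x) \<le> Gr t" .
    then have "c0 * (Gr x + g x * (t - x)) \<le> c0 * Gr t" using c0_pos by (intro mult_left_mono) auto
    then have "- c0 * Gr t \<le> - c0 * Gr x + - (c0 * g x) * (t - x)" by (simp add: algebra_simps)
    then show "q t \<le> q x * exp (- (c0 * g x) * (t - x))" unfolding q_def by (simp add: exp_add[symmetric])
  qed
  define q' where "q' = (\<lambda>t. q (- t))"
  have q'pos: "\<And>t. q' t > 0" unfolding q'_def using qpos by simp
  have q'm[measurable]: "q' \<in> borel_measurable borel" unfolding q'_def by measurable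
  have D': "\<And>x. ((\<lambda>t. Gr (- t)) has_real_derivative (- g (- x))) (at x)"
    using DERIV_chain2[OF D DERIV_minus[OF DERIV_ident]] by simp
  have m': "mono (\<lambda>t. - g (- t))" using H1(1) by (auto simp: mono_def)
  have S': "\<And>u v. 0 \<le> u \<Longrightarrow> 0 \<le> v \<Longrightarrow> q' (u+v) \<le> q' u * q' v"
  proof -
    fix u v :: real assume "0 \<le> u" "0 \<le> v"
    from superadd[OF D' m' _ this] G0 have "Gr (-u) + Gr (-v) \<le> Gr (-(u + v))" by simp
    then have "c0 * (Gr (-u) + Gr (-v)) \<le> c0 * Gr (-(u + v))" using c0_pos by (intro mult_left_mono) auto
    then have "- c0 * Gr (-(u + v)) \<le> - c0 * Gr (-u) + - c0 * Gr (-v)" by (simp add: algebra_simps)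
    then show "q' (u+v) \<le> q' u * q' v" unfolding q'_def q_def by (simp add: exp_add[symmetric])
  qed
  have Zpos: "Z > 0"
  proof -
    have "0 \<le> Z" unfolding Z_def using qpos by (intro integral_nonneg_AE AE_I2) (auto simp: less_imp_le)
    moreover have "Z \<noteq> 0"
    proof
      assume "Z = 0"
      then have "AE t in lborel. q t = 0"
        using integral_nonneg_eq_0_iff_AE[OF qi] qpos unfolding Z_def by (simp add: less_imp_le)
      moreover have "{t \<in> space lborel. \<not> q t = 0} \<in> sets lborel" by measurable
      ultimately have "{t \<in> space lborel. \<not> q t = 0} \<in> null_sets lborel"
        using AE_iff_null[of lborel "\<lambda>t. q t = 0"] by simp
      moreover have "{t \<in> space lborel. \<not> q t = 0} = UNIV" using qpos by (auto simp: less_le)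
      ultimately have "UNIV \<in> null_sets (lborel :: real measure)" by simp
      then show False by (simp add: null_sets_def)
    qed
    ultimately show ?thesis by simp
  qed
  have c1pos: "c1 > 0" using Zpos c1Z by simp
  have invc1: "1 / c1 = Z" using c1Z Zpos by simp
  define zp where "zp = (\<integral>t. indicator {0..} t * q t \<partial>lborel)"
  define zn where "zn = (\<integral>t. indicator {..0} t * q t \<partial>lborel)"
  have ip: "integrable lborel (\<lambda>t. indicator {0..} t * q t)"
    using integrable_mult_indicator[OF _ qi, of "{0..}"] by simp
  have in_: "integrable lborel (\<lambda>t. indicator {..0} t * q t)"
    using integrable_mult_indicator[OF _ qi, of "{..0}"] by simp
  have zp0: "0 \<le> zp" unfolding zp_def using qpos by (intro integral_nonneg_AE AE_I2) (auto simp: indicator_def less_imp_le)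
  have zn0: "0 \<le> zn" unfolding zn_def using qpos by (intro integral_nonneg_AE AE_I2) (auto simp: indicator_def less_imp_le)
  have zpnn: "(\<integral>\<^sup>+t. ennreal (indicator {0..} t * q t) \<partial>lborel) = ennreal zp"
    unfolding zp_def using ip qpos by (intro nn_integral_eq_integral) (auto simp: less_imp_le)
  have znnn0: "(\<integral>\<^sup>+t. ennreal (indicator {..0} t * q t) \<partial>lborel) = ennreal zn"
    unfolding zn_def using in_ qpos by (intro nn_integral_eq_integral) (auto simp: less_imp_le)
  have znnn: "(\<integral>\<^sup>+t. ennreal (indicator {0..} t * q' t) \<partial>lborel) = ennreal zn"
    using znnn0 refl_nn[OF qm, of 0] unfolding q'_def by simp
  have zsum: "zp + zn = Z"
  proof -
    have "zp + zn = (\<integral>t. indicator {0..} t * q t + indicator {..0} t * q t \<partial>lborel)"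
      unfolding zp_def zn_def by (rule Bochner_Integration.integral_add[OF ip in_, symmetric])
    also have "\<dots> = Z" unfolding Z_def
      using AE_lborel_singleton[of "0::real"]
      by (intro integral_cong_AE) (auto elim!: AE_mp simp: indicator_def)
    finally show ?thesis .
  qed
  have intp: "(\<integral>t. p t \<partial>lborel) = 1"
    unfolding p_q using Zpos c1Z by (simp add: Z_def)
  have pi: "integrable lborel p" unfolding p_q using qi by simp
  define E where "E = (\<integral>t. \<bar>t\<bar> * q t \<partial>lborel)"
  have E0: "0 \<le> E" unfolding E_def using qpos by (intro integral_nonneg_AE AE_I2) (auto simp: indicator_def less_imp_le)
  have EYE: "EY = c1 * E" unfolding EY_def E_def p_q
    by (simp add: mult.left_commute)
  have Wp: "(\<integral>\<^sup>+t. ennreal (indicator {0..} t * (t * q t)) \<partial>lborel) \<le> ennreal (zp * zp)"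
    by (rule mean_bound[OF qm qpos S zpnn zp0])
  have Wn: "(\<integral>\<^sup>+t. ennreal (indicator {0..} t * (t * q' t)) \<partial>lborel) \<le> ennreal (zn * zn)"
    by (rule mean_bound[OF q'm q'pos S' znnn zn0])
  have Ebound: "E \<le> Z * Z"
  proof -
    have "E \<le> zp * zp + zn * zn"
      unfolding E_def
    proof (rule integral_real_bounded)
      show "0 \<le> zp * zp + zn * zn" using zp0 zn0 by simp
      have eq2: "(\<integral>\<^sup>+t. ennreal (indicator {..0} t * (\<bar>t\<bar> * q t)) \<partial>lborel)
          = (\<integral>\<^sup>+t. ennreal (indicator {0..} t * (t * q' t)) \<partial>lborel)"
      proof -
        have "(\<integral>\<^sup>+t. ennreal (indicator {..0} t * (\<bar>t\<bar> * q t)) \<partial>lborel)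
            = (\<integral>\<^sup>+t. ennreal (indicator {-0..} t * (\<bar>-t\<bar> * q (-t))) \<partial>lborel)"
          by (rule refl_nn) simp
        also have "\<dots> = (\<integral>\<^sup>+t. ennreal (indicator {0..} t * (t * q' t)) \<partial>lborel)"
          unfolding q'_def by (intro nn_integral_cong) (auto simp: indicator_def)
        finally show ?thesis .
      qed
      have "(\<integral>\<^sup>+t. ennreal (\<bar>t\<bar> * q t) \<partial>lborel)
          \<le> (\<integral>\<^sup>+t. ennreal (indicator {0..} t * (t * q t)) + ennreal (indicator {..0} t * (\<bar>t\<bar> * q t)) \<partial>lborel)"
      proof (rule nn_integral_mono)
        fix t :: real
        have "\<bar>t\<bar> * q t \<le> indicator {0..} t * (t * q t) + indicator {..0} t * (\<bar>t\<bar> * q t)"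
          using qpos[of t] by (auto simp: indicator_def)
        then show "ennreal (\<bar>t\<bar> * q t) \<le> ennreal (indicator {0..} t * (t * q t)) + ennreal (indicator {..0} t * (\<bar>t\<bar> * q t))"
          using qpos[of t] by (subst ennreal_plus[symmetric]) (auto simp: indicator_def intro!: ennreal_leI)
      qed
      also have "\<dots> = (\<integral>\<^sup>+t. ennreal (indicator {0..} t * (t * q t)) \<partial>lborel)
                     + (\<integral>\<^sup>+t. ennreal (indicator {..0} t * (\<bar>t\<bar> * q t)) \<partial>lborel)"
        by (rule nn_integral_add) auto
      also have "\<dots> = (\<integral>\<^sup>+t. ennreal (indicator {0..} t * (t * q t)) \<partial>lborel)
                     + (\<integral>\<^sup>+t. ennreal (indicator {0..} t * (t * q' t)) \<partial>lborel)" using eq2 by simp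
      also have "\<dots> \<le> ennreal (zp * zp) + ennreal (zn * zn)" using Wp Wn by (rule add_mono)
      also have "\<dots> = ennreal (zp * zp + zn * zn)" using zp0 zn0 by (simp add: ennreal_plus)
      finally show "(\<integral>\<^sup>+t. ennreal (\<bar>t\<bar> * q t) \<partial>lborel) \<le> ennreal (zp * zp + zn * zn)" .
    qed
    also have "\<dots> \<le> (zp + zn) * (zp + zn)" using zp0 zn0 by (simp add: algebra_simps)
    finally show ?thesis using zsum by simp
  qed
  have zpZ: "zp \<le> Z" and znZ: "zn \<le> Z" using zsum zp0 zn0 by auto
  define Ql where "Ql = (\<lambda>x. set_lebesgue_integral lborel {..x} q)"
  define Qr where "Qr = (\<lambda>x. set_lebesgue_integral lborel {x<..} q)"
  define Ul where "Ul = (\<lambda>x. set_lebesgue_integral lborel {..x} (\<lambda>t. \<bar>t\<bar> * q t))"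
  define Ur where "Ur = (\<lambda>x. set_lebesgue_integral lborel {x<..} (\<lambda>t. \<bar>t\<bar> * q t))"
  have FQ: "\<And>x. F x = c1 * Ql x" unfolding F_def Ql_def p_q by simp
  have TQ: "\<And>x. 1 - F x = c1 * Qr x"
  proof -
    fix x :: real
    have "F x + c1 * Qr x = (\<integral>t. indicator {..x} t * p t + indicator {x<..} t * p t \<partial>lborel)"
      unfolding F_def Qr_def p_q set_lebesgue_integral_def
      using integrable_mult_indicator[OF _ qi, of "{..x}"] integrable_mult_indicator[OF _ qi, of "{x<..}"]
      by (subst Bochner_Integration.integral_add) (auto simp: mult.left_commute)
    also have "\<dots> = (\<integral>t. p t \<partial>lborel)" by (intro Bochner_Integration.integral_cong) (auto simp: indicator_def)
    finally show "1 - F x = c1 * Qr x" using intp by simp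
  qed
  have Mform: "\<And>x. M x = min (c1 * Ul x + EY * F x) (c1 * Ur x + EY * (1 - F x))"
    unfolding M_def Ul_def Ur_def p_q by (simp add: mult.left_commute)
  have Ql0: "\<And>x. 0 \<le> Ql x" and Qr0: "\<And>x. 0 \<le> Qr x" unfolding Ql_def Qr_def set_lebesgue_integral_def
    using qpos by (auto intro!: integral_nonneg_AE AE_I2 simp: indicator_def less_imp_le)
  have pderiv: "\<And>x. deriv p x = c1 * (- c0 * g x * q x)"
    unfolding p_q by (rule DERIV_imp_deriv[OF DERIV_cmult[OF Dq]])
  have ratio: "(\<lambda>t. deriv p t / p t) = (\<lambda>t. - c0 * g t)"
  proof (rule ext)
    fix t
    show "deriv p t / p t = - c0 * g t"
      by (simp only: pderiv) (use c1pos qpos[of t] in \<open>simp add: p_q field_simps\<close>)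
  qed
  have rderiv: "\<And>x. deriv (\<lambda>t. deriv p t / p t) x = - c0 * deriv g x"
  proof -
    fix x
    have "(g has_real_derivative deriv g x) (at x)" using diff DERIV_deriv_iff_real_differentiable by blast
    then show "deriv (\<lambda>t. deriv p t / p t) x = - c0 * deriv g x"
      unfolding ratio by (intro DERIV_imp_deriv DERIV_cmult)
  qed
  show ?thesis
  proof (intro allI)
    fix x :: real
    define a where "a = \<bar>c0 * g x\<bar>"
    define K where "K = (if a = 0 then Z else min Z (1 / a))"
    define mx where "mx = max 1 (c0 * \<bar>deriv g x\<bar>)"
    have a0: "0 \<le> a" unfolding a_def by simp
    have H2x: "K * (\<bar>x\<bar> + 3 * Z) * mx \<le> c2"
    proof -
      have e1: "(if g x = 0 then 1 / c1 else min (1 / c1) (1 / \<bar>c0 * g x\<bar>)) = K"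
        unfolding K_def a_def invc1 using c0_pos by simp
      have e2: "3 / c1 = 3 * Z" using invc1 by (metis times_divide_eq_right mult_1_right)
      from H2 have "(if g x = 0 then 1 / c1 else min (1 / c1) (1 / \<bar>c0 * g x\<bar>))
                 * (\<bar>x\<bar> + 3 / c1) * max 1 (c0 * \<bar>deriv g x\<bar>) \<le> c2" by blast
      then show ?thesis unfolding e1 e2 mx_def .
    qed
    have K0: "0 \<le> K * (\<bar>x\<bar> + 3 * Z)" unfolding K_def using Zpos a0 by auto
    have px: "p x = c1 * q x" unfolding p_q ..
    have pxpos: "0 < c1 * q x" using c1pos qpos by simp
    have dpx: "\<bar>deriv p x\<bar> = a * (c1 * q x)"
      unfolding pderiv a_def using c1pos qpos[of x] c0_pos by (simp add: abs_mult)
    have dr: "\<bar>deriv (\<lambda>t. deriv p t / p t) x\<bar> \<le> mx" unfolding rderiv mx_def using c0_pos by (simp add: abs_mult)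
    have mx1: "1 \<le> mx" unfolding mx_def by simp
    have EYE': "EY * (c1 * Qr x) = (c1 * E) * (c1 * Qr x)" "EY * (c1 * Ql x) = (c1 * E) * (c1 * Ql x)"
      using EYE by simp_all
    show "min (1 - F x) (F x) \<le> (1 / c1) * p x
           \<and> \<bar>deriv p x\<bar> * min (F x) (1 - F x) \<le> 1 * (p x)\<^sup>2
           \<and> M x * \<bar>deriv (\<lambda>t. deriv p t / p t) x\<bar> \<le> c2 * p x
           \<and> M x \<le> c2 * p x"
    proof (cases "x > 0")
      case True
      have gx: "0 \<le> g x" using H1(2) True by simp
      have aeq: "a = c0 * g x" unfolding a_def using gx c0_pos by simp
      have x0: "0 \<le> x" using True by simp
      have Q1: "Qr x \<le> q x * zp"
        unfolding Qr_def
        by (rule set_bound[of _ _ "{x..}"]) (use qpos tail_S[OF qm qpos S x0 zpnn] zp0 in \<open>auto simp: less_imp_le\<close>)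
      have Q2: "a > 0 \<Longrightarrow> Qr x \<le> q x / a"
        unfolding Qr_def
        by (rule set_bound[of _ _ "{x..}"])
           (use qpos Tan[where x=x] in \<open>auto simp: less_imp_le aeq intro!: tail_T[OF qm qpos]\<close>)
      have nnU: "(\<integral>\<^sup>+t. ennreal (indicator {x..} t * (\<bar>t\<bar> * q t)) \<partial>lborel)
          = (\<integral>\<^sup>+t. ennreal (indicator {x..} t * (t * q t)) \<partial>lborel)"
        using x0 by (intro nn_integral_cong) (auto simp: indicator_def)
      have U1: "Ur x \<le> q x * (x * zp + zp * zp)"
        unfolding Ur_def
        by (rule set_bound[of _ _ "{x..}"])
           (use qpos x0 zp0 in \<open>auto simp: less_imp_le nnU intro!: tail_S1[OF qm qpos S x0 zpnn Wp]\<close>)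
      have U2: "a > 0 \<Longrightarrow> Ur x \<le> q x * (x / a + 1 / a^2)"
        unfolding Ur_def
        by (rule set_bound[of _ _ "{x..}"])
           (use qpos x0 Tan[where x=x] in \<open>auto simp: less_imp_le nnU aeq intro!: tail_T1[OF qm qpos]\<close>)
      note A = alg[OF Zpos c1Z qpos[of x] zp0 zpZ x0 a0 Qr0[of x] Q1 Q2 U1 U2 E0 Ebound]
      have A3: "c1 * Ur x + EY * (1 - F x) \<le> K * (\<bar>x\<bar> + 3 * Z) * (c1 * q x)"
        using A(3) x0 unfolding K_def TQ EYE'(1) by simp
      have MB: "M x \<le> c1 * Ur x + EY * (1 - F x)" unfolding Mform by simp
      note FF = fin[OF MB A3 K0 pxpos dr mx1 H2x]
      have c1: "min (1 - F x) (F x) \<le> (1 / c1) * p x"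
        using A(1) x0 c1pos unfolding TQ px by (simp add: min_le_iff_disj)
      have "\<bar>deriv p x\<bar> * min (F x) (1 - F x) \<le> a * (c1 * q x) * (c1 * Qr x)"
        unfolding dpx TQ using a0 pxpos by (intro mult_left_mono) auto
      also have "\<dots> \<le> (c1 * q x)^2" using A(2) x0 by simp
      finally have c2': "\<bar>deriv p x\<bar> * min (F x) (1 - F x) \<le> 1 * (p x)\<^sup>2" unfolding px by simp
      show ?thesis using c1 c2' FF unfolding px by simp
    next
      case False
      then have x0: "0 \<le> - x" by simp
      have gx: "g x \<le> 0" using H1(3) False by simp
      have aeq: "a = - c0 * g x" unfolding a_def using gx c0_pos by (simp add: abs_mult)
      have q'x: "q' (-x) = q x" unfolding q'_def by simp
      have nnQ: "(\<integral>\<^sup>+t. ennreal (indicator {..x} t * q t) \<partial>lborel)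
          = (\<integral>\<^sup>+t. ennreal (indicator {-x..} t * q' t) \<partial>lborel)"
        unfolding q'_def by (rule refl_nn[OF qm])
      have Q1: "Ql x \<le> q x * zn"
        unfolding Ql_def
        by (rule set_bound[of _ _ "{..x}"]) (use qpos tail_S[OF q'm q'pos S' x0 znnn] zn0 in \<open>auto simp: less_imp_le nnQ q'x\<close>)
      have Tan': "\<And>t. -x \<le> t \<Longrightarrow> q' t \<le> q' (-x) * exp (- a * (t - - x))"
      proof -
        fix t :: real
        have "q (- t) \<le> q x * exp (- (c0 * g x) * (- t - x))" by (rule Tan)
        moreover have "- (c0 * g x) * (- t - x) = - a * (t - - x)" unfolding aeq by (simp add: algebra_simps)
        ultimately show "q' t \<le> q' (-x) * exp (- a * (t - - x))" unfolding q'_def by simp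
      qed
      have Q2: "a > 0 \<Longrightarrow> Ql x \<le> q x / a"
        unfolding Ql_def
        by (rule set_bound[of _ _ "{..x}"])
           (use qpos tail_T[OF q'm q'pos _ Tan'] in \<open>auto simp: less_imp_le nnQ q'x\<close>)
      have nnU: "(\<integral>\<^sup>+t. ennreal (indicator {..x} t * (\<bar>t\<bar> * q t)) \<partial>lborel)
          = (\<integral>\<^sup>+t. ennreal (indicator {-x..} t * (t * q' t)) \<partial>lborel)"
      proof -
        have "(\<integral>\<^sup>+t. ennreal (indicator {..x} t * (\<bar>t\<bar> * q t)) \<partial>lborel)
            = (\<integral>\<^sup>+t. ennreal (indicator {-x..} t * (\<bar>-t\<bar> * q (-t))) \<partial>lborel)"
          by (rule refl_nn) simp
        also have "\<dots> = (\<integral>\<^sup>+t. ennreal (indicator {-x..} t * (t * q' t)) \<partial>lborel)"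
          unfolding q'_def using x0 by (intro nn_integral_cong) (auto simp: indicator_def)
        finally show ?thesis .
      qed
      have nn1: "0 \<le> q x * (- x * zn + zn * zn)" using qpos[of x] x0 zn0
        by (intro mult_nonneg_nonneg add_nonneg_nonneg) (auto simp: less_imp_le divide_nonpos_pos)
      have U1: "Ul x \<le> q x * (- x * zn + zn * zn)"
        unfolding Ul_def
        by (rule set_bound[of _ _ "{..x}"])
           (use qpos x0 zn0 nn1 tail_S1[OF q'm q'pos S' x0 znnn Wn] in \<open>auto simp: less_imp_le nnU q'x\<close>)
      have nn2: "a > 0 \<Longrightarrow> 0 \<le> q x * (- x / a + 1 / a^2)" using qpos[of x] x0
        by (intro mult_nonneg_nonneg add_nonneg_nonneg) (auto simp: less_imp_le divide_nonpos_pos)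
      have U2: "a > 0 \<Longrightarrow> Ul x \<le> q x * (- x / a + 1 / a^2)"
        unfolding Ul_def
        by (rule set_bound[of _ _ "{..x}"])
           (use qpos x0 nn2 tail_T1[OF q'm q'pos _ x0 Tan'] in \<open>auto simp: less_imp_le nnU q'x\<close>)
      note A = alg[OF Zpos c1Z qpos[of x] zn0 znZ x0 a0 Ql0[of x] Q1 Q2 U1 U2 E0 Ebound]
      have A3: "c1 * Ul x + EY * F x \<le> K * (\<bar>x\<bar> + 3 * Z) * (c1 * q x)"
        using A(3) x0 unfolding K_def FQ EYE'(2) by simp
      have MB: "M x \<le> c1 * Ul x + EY * F x" unfolding Mform by simp
      note FF = fin[OF MB A3 K0 pxpos dr mx1 H2x]
      have c1: "min (1 - F x) (F x) \<le> (1 / c1) * p x"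
        using A(1) x0 c1pos unfolding FQ px by (simp add: min_le_iff_disj)
      have "\<bar>deriv p x\<bar> * min (F x) (1 - F x) \<le> a * (c1 * q x) * (c1 * Ql x)"
        unfolding dpx FQ using a0 pxpos by (intro mult_left_mono) auto
      also have "\<dots> \<le> (c1 * q x)^2" using A(2) x0 by simp
      finally have c2': "\<bar>deriv p x\<bar> * min (F x) (1 - F x) \<le> 1 * (p x)\<^sup>2" unfolding px by simp
      show ?thesis using c1 c2' FF unfolding px by simp
    qed
  qed
qed

end
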